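(* Let $m\ge 1$ and let $G$ be the complement of the path graph $P_{2m}$, i.e., the simple graph on vertices $\{1,\dots,2m\}$ in which distinct vertices $i,j$ are adjacent if and only if $|i-j|\ge 2$. Then the number of perfect matchings of $G$ equals $$\sum_{k=0}^{m}(-1)^{m-k}\frac{(m+k)!}{k!\,(m-k)!\,2^{k}}.$$
   Context: A perfect matching of a graph on $2m$ vertices is a set of $m$ edges, no two of which share a vertex. *)

theory Defs
  imports Complex_Main
begin

definition path_complement_edges :: "nat \<Rightarrow> nat set set" where
  "path_complement_edges m =
     {{i, j} | i j. i \<in> {1..2*m} \<and> j \<in> {1..2*m} \<and> i \<noteq> j \<and> 2 \<le> \<bar>int i - int j\<bar>}"

definition perfect_matching :: "'a set \<Rightarrow> 'a set set \<Rightarrow> 'a set set \<Rightarrow> bool" where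
  "perfect_matching V E M \<longleftrightarrow>
     M \<subseteq> E \<and>
     (\<forall>e\<in>M. \<forall>f\<in>M. e \<noteq> f \<longrightarrow> e \<inter> f = {}) \<and>
     \<Union>M = V"

end

theory Submission
  imports Defs
begin

definition Ed :: "nat set \<Rightarrow> (nat \<Rightarrow> nat \<Rightarrow> bool) \<Rightarrow> nat set set" where
  "Ed V P = {{x, y} | x y. x \<in> V \<and> y \<in> V \<and> x \<noteq> y \<and> P x y}"

definition cnt :: "nat set \<Rightarrow> (nat \<Rightarrow> nat \<Rightarrow> bool) \<Rightarrow> nat" where
  "cnt V P = card {M. perfect_matching V (Ed V P) M}"

lemma Ed_sub: "Ed V P \<subseteq> Pow V"
  unfolding Ed_def by auto

lemma pm_finite: "finite V \<Longrightarrow> finite {M. perfect_matching V (Ed V P) M}"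
proof -
  assume "finite V"
  then have "finite (Pow (Ed V P))" using Ed_sub by (meson finite_Pow_iff finite_subset)
  moreover have "{M. perfect_matching V (Ed V P) M} \<subseteq> Pow (Ed V P)"
    unfolding perfect_matching_def by auto
  ultimately show ?thesis by (rule finite_subset[rotated])
qed

lemma cnt_empty: "cnt {} P = 1"
proof -
  have "{M. perfect_matching {} (Ed {} P) M} = {{}}"
    unfolding perfect_matching_def Ed_def by auto
  then show ?thesis unfolding cnt_def by simp
qed

lemma cnt_cong: "(\<And>x y. x \<in> V \<Longrightarrow> y \<in> V \<Longrightarrow> P x y = Q x y) \<Longrightarrow> cnt V P = cnt V Q"
proof -
  assume "\<And>x y. x \<in> V \<Longrightarrow> y \<in> V \<Longrightarrow> P x y = Q x y"
  then have "Ed V P = Ed V Q" unfolding Ed_def by blast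
  then show ?thesis unfolding cnt_def by simp
qed

lemma card_with_edge:
  assumes "x \<in> V" "y \<in> V" "x \<noteq> y" "P x y"
  shows "card {M. perfect_matching V (Ed V P) M \<and> {x,y} \<in> M} = cnt (V - {x,y}) P"
proof -
  let ?A = "{M. perfect_matching V (Ed V P) M \<and> {x,y} \<in> M}"
  let ?B = "{N. perfect_matching (V - {x,y}) (Ed (V - {x,y}) P) N}"
  have nB: "{x,y} \<notin> N" if "N \<in> ?B" for N
  proof
    assume "{x,y} \<in> N"
    then have "x \<in> \<Union>N" by blast
    moreover have "\<Union>N = V - {x,y}" using that unfolding perfect_matching_def by simp
    ultimately show False by simp
  qed
  have "bij_betw (\<lambda>M. M - {{x,y}}) ?A ?B"
  proof (rule bij_betw_byWitness[where f'="insert {x,y}"])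
    show "\<forall>a\<in>?A. insert {x, y} (a - {{x, y}}) = a" by auto
    show "\<forall>a\<in>?B. insert {x, y} a - {{x, y}} = a"
      using nB by auto
    show "(\<lambda>M. M - {{x, y}}) ` ?A \<subseteq> ?B"
    proof
      fix N assume "N \<in> (\<lambda>M. M - {{x, y}}) ` ?A"
      then obtain M where M: "perfect_matching V (Ed V P) M" "{x,y} \<in> M" and N: "N = M - {{x,y}}" by auto
      have sub: "M \<subseteq> Ed V P" and dis: "\<forall>e\<in>M. \<forall>f\<in>M. e \<noteq> f \<longrightarrow> e \<inter> f = {}" and un: "\<Union>M = V"
        using M(1) unfolding perfect_matching_def by auto
      have d: "e \<inter> {x,y} = {}" if "e \<in> N" for e
      proof -
        have eM: "e \<in> M" and ne: "e \<noteq> {x,y}" using that N by auto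
        show ?thesis using dis[rule_format, OF eM M(2) ne] .
      qed
      have "N \<subseteq> Ed (V - {x,y}) P"
      proof
        fix e assume e: "e \<in> N"
        then have "e \<in> Ed V P" using sub N by auto
        then obtain a b where ab: "e = {a,b}" "a \<in> V" "b \<in> V" "a \<noteq> b" "P a b" unfolding Ed_def by auto
        have "a \<notin> {x,y}" "b \<notin> {x,y}" using d[OF e] ab(1) by auto
        then show "e \<in> Ed (V - {x,y}) P" unfolding Ed_def using ab by auto
      qed
      moreover have "\<Union>N = V - {x,y}"
      proof
        show "\<Union>N \<subseteq> V - {x,y}"
        proof
          fix v assume "v \<in> \<Union>N"
          then obtain e where e: "e \<in> N" "v \<in> e" by auto
          then have "v \<in> V" using un N by auto
          moreover have "v \<notin> {x,y}" using d[OF e(1)] e(2) by auto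
          ultimately show "v \<in> V - {x,y}" by simp
        qed
        show "V - {x,y} \<subseteq> \<Union>N"
        proof
          fix v assume v: "v \<in> V - {x,y}"
          then obtain e where e: "e \<in> M" "v \<in> e" using un by auto
          then have "e \<noteq> {x,y}" using v by auto
          then show "v \<in> \<Union>N" using e N by auto
        qed
      qed
      moreover have "\<forall>e\<in>N. \<forall>f\<in>N. e \<noteq> f \<longrightarrow> e \<inter> f = {}" using dis N by auto
      ultimately show "N \<in> ?B" unfolding perfect_matching_def by auto
    qed
    show "insert {x,y} ` ?B \<subseteq> ?A"
    proof
      fix M assume "M \<in> insert {x,y} ` ?B"
      then obtain N where N: "perfect_matching (V - {x,y}) (Ed (V - {x,y}) P) N" and M: "M = insert {x,y} N" by auto
      have sub: "N \<subseteq> Ed (V-{x,y}) P" and dis: "\<forall>e\<in>N. \<forall>f\<in>N. e \<noteq> f \<longrightarrow> e \<inter> f = {}" and un: "\<Union>N = V - {x,y}"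
        using N unfolding perfect_matching_def by auto
      have "Ed (V-{x,y}) P \<subseteq> Ed V P" unfolding Ed_def by blast
      moreover have "{x,y} \<in> Ed V P" unfolding Ed_def using assms by blast
      ultimately have "M \<subseteq> Ed V P" using sub M by auto
      moreover have "\<forall>e\<in>M. \<forall>f\<in>M. e \<noteq> f \<longrightarrow> e \<inter> f = {}"
      proof (intro ballI impI)
        fix e f assume ef: "e \<in> M" "f \<in> M" "e \<noteq> f"
        have dd: "g \<inter> {x,y} = {}" if "g \<in> N" for g
        proof -
          have "g \<subseteq> \<Union>N" using that by auto
          then show ?thesis using un by auto
        qed
        show "e \<inter> f = {}"
        proof (cases "e = {x,y}")
          case True
          then have "f \<in> N" using ef M by auto
          then show ?thesis using dd True by auto
        next
          case False
          then have eN: "e \<in> N" using ef M by auto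
          show ?thesis
          proof (cases "f = {x,y}")
            case True
            then show ?thesis using dd[OF eN] by auto
          next
            case False
            then have "f \<in> N" using ef M by auto
            then show ?thesis using dis eN ef(3) by auto
          qed
        qed
      qed
      moreover have "\<Union>M = V" using un M assms by auto
      ultimately show "M \<in> ?A" using M unfolding perfect_matching_def by auto
    qed
  qed
  then show ?thesis unfolding cnt_def by (rule bij_betw_same_card)
qed

lemma cnt_remove:
  assumes fin: "finite V" and x: "x \<in> V" and sym: "\<And>a b. P a b = P b a"
  shows "cnt V P = (\<Sum>y\<in>{y\<in>V. y \<noteq> x \<and> P x y}. cnt (V - {x,y}) P)"
proof -
  let ?S = "{M. perfect_matching V (Ed V P) M}"
  let ?Y = "{y\<in>V. y \<noteq> x \<and> P x y}"
  let ?A = "\<lambda>y. {M. perfect_matching V (Ed V P) M \<and> {x,y} \<in> M}"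
  have eq: "?S = (\<Union>y\<in>?Y. ?A y)"
  proof
    show "(\<Union>y\<in>?Y. ?A y) \<subseteq> ?S" by auto
    show "?S \<subseteq> (\<Union>y\<in>?Y. ?A y)"
    proof
      fix M assume M: "M \<in> ?S"
      then have sub: "M \<subseteq> Ed V P" and un: "\<Union>M = V" unfolding perfect_matching_def by auto
      then obtain e where e: "e \<in> M" "x \<in> e" using x by auto
      then have "e \<in> Ed V P" using sub by auto
      then obtain a b where ab: "e = {a,b}" "a \<in> V" "b \<in> V" "a \<noteq> b" "P a b" unfolding Ed_def by auto
      show "M \<in> (\<Union>y\<in>?Y. ?A y)"
      proof (cases "a = x")
        case True
        then show ?thesis using ab e M by auto
      next
        case False
        then have "b = x" using ab e by auto
        then have "e = {x, a}" "P x a" using ab sym by auto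
        then show ?thesis using ab e M False by auto
      qed
    qed
  qed
  have "card ?S = (\<Sum>y\<in>?Y. card (?A y))"
    unfolding eq
  proof (rule card_UN_disjoint)
    show "finite ?Y" using fin by auto
    show "\<forall>i\<in>?Y. finite (?A i)"
      using pm_finite[OF fin, of P] by (auto intro: finite_subset[rotated])
    show "\<forall>i\<in>?Y. \<forall>j\<in>?Y. i \<noteq> j \<longrightarrow> ?A i \<inter> ?A j = {}"
    proof (intro ballI impI)
      fix i j assume "i \<in> ?Y" "j \<in> ?Y" "i \<noteq> j"
      show "?A i \<inter> ?A j = {}"
      proof (rule ccontr)
        assume "?A i \<inter> ?A j \<noteq> {}"
        then obtain M where "perfect_matching V (Ed V P) M" "{x,i} \<in> M" "{x,j} \<in> M" by auto
        then have "{x,i} \<inter> {x,j} = {}" using \<open>i \<noteq> j\<close> unfolding perfect_matching_def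
          by (metis doubleton_eq_iff)
        then show False by auto
      qed
    qed
  qed
  also have "\<dots> = (\<Sum>y\<in>?Y. cnt (V - {x,y}) P)"
    by (rule sum.cong) (use x sym in \<open>auto intro!: card_with_edge\<close>)
  finally show ?thesis unfolding cnt_def .
qed

definition Pr :: "nat set \<Rightarrow> nat \<Rightarrow> nat \<Rightarrow> bool" where
  "Pr Q x y \<longleftrightarrow> 2 \<le> \<bar>int x - int y\<bar> \<and> \<not> (x \<in> Q \<and> y \<in> Q)"

lemma Pr_sym: "Pr Q a b = Pr Q b a" unfolding Pr_def by auto

fun F :: "nat \<Rightarrow> bool \<Rightarrow> nat \<Rightarrow> nat" where
  "F a p 0 = (if a = 0 then 1 else 0)"
| "F a p (Suc r) = (a - (if p then 1 else 0)) * F (a - 1) False r + F (Suc a) True r"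

lemma state:
  "finite Q \<Longrightarrow> Q \<subseteq> {..<i} \<Longrightarrow> cnt (Q \<union> {i..<i+r}) (Pr Q) = F (card Q) (i - 1 \<in> Q) r"
proof (induction r arbitrary: Q i)
  case 0
  show ?case
  proof (cases "Q = {}")
    case True
    then show ?thesis using cnt_empty by simp
  next
    case False
    then obtain x where x: "x \<in> Q" by auto
    have "cnt Q (Pr Q) = (\<Sum>y\<in>{y\<in>Q. y \<noteq> x \<and> Pr Q x y}. cnt (Q - {x,y}) (Pr Q))"
      by (rule cnt_remove[OF 0(1) x Pr_sym])
    also have "{y\<in>Q. y \<noteq> x \<and> Pr Q x y} = {}" using x unfolding Pr_def by auto
    finally show ?thesis using False 0(1) by simp
  qed
next
  case (Suc r)
  let ?V = "Q \<union> {i..<i + Suc r}"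
  have iO: "i \<notin> Q" using Suc.prems by auto
  have fV: "finite ?V" using Suc.prems by auto
  have iV: "i \<in> ?V" by auto
  define Y1 where "Y1 = Q - {i - 1}"
  define Y2 where "Y2 = {i+2..<i + Suc r}"
  have Yeq: "{y\<in>?V. y \<noteq> i \<and> Pr Q i y} = Y1 \<union> Y2"
  proof -
    have lt: "y \<in> Q \<Longrightarrow> y < i" for y using Suc.prems by auto
    have ab: "y \<in> Q \<Longrightarrow> y \<noteq> i - 1 \<Longrightarrow> 2 \<le> \<bar>int i - int y\<bar>" for y
      using lt[of y] by linarith
    show ?thesis unfolding Y1_def Y2_def Pr_def using iO ab by auto
  qed
  have dis: "Y1 \<inter> Y2 = {}" unfolding Y1_def Y2_def using Suc.prems by auto
  have fY1: "finite Y1" "finite Y2" unfolding Y1_def Y2_def using Suc.prems by auto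
  have "cnt ?V (Pr Q) = (\<Sum>y\<in>Y1 \<union> Y2. cnt (?V - {i,y}) (Pr Q))"
    using cnt_remove[OF fV iV Pr_sym] Yeq by simp
  also have "\<dots> = (\<Sum>y\<in>Y1. cnt (?V - {i,y}) (Pr Q)) + (\<Sum>y\<in>Y2. cnt (?V - {i,y}) (Pr Q))"
    by (rule sum.union_disjoint[OF fY1 dis])
  also have "(\<Sum>y\<in>Y1. cnt (?V - {i,y}) (Pr Q)) = (\<Sum>y\<in>Y1. F (card Q - 1) False r)"
  proof (rule sum.cong[OF refl])
    fix y assume y: "y \<in> Y1"
    then have yO: "y \<in> Q" unfolding Y1_def by auto
    have e: "?V - {i,y} = (Q - {y}) \<union> {Suc i..<Suc i + r}" using iO yO Suc.prems by auto
    have "cnt (?V - {i,y}) (Pr Q) = cnt ((Q - {y}) \<union> {Suc i..<Suc i + r}) (Pr (Q - {y}))"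
      unfolding e by (rule cnt_cong) (auto simp: Pr_def dest: subsetD[OF Suc.prems(2)])
    also have "\<dots> = F (card (Q - {y})) (Suc i - 1 \<in> Q - {y}) r"
      by (rule Suc.IH) (use Suc.prems in auto)
    finally show "cnt (?V - {i,y}) (Pr Q) = F (card Q - 1) False r"
      using yO iO Suc.prems by simp
  qed
  also have "(\<Sum>y\<in>Y1. F (card Q - 1) False r) = (card Q - (if i - 1 \<in> Q then 1 else 0)) * F (card Q - 1) False r"
    unfolding Y1_def using Suc.prems by (simp add: card_Diff_singleton_if)
  also have "(\<Sum>y\<in>Y2. cnt (?V - {i,y}) (Pr Q)) = F (Suc (card Q)) True r"
  proof -
    have V': "?V = insert i Q \<union> {Suc i..<Suc i + r}" by auto
    have "F (Suc (card Q)) True r = F (card (insert i Q)) (Suc i - 1 \<in> insert i Q) r"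
      using iO Suc.prems by simp
    also have "\<dots> = cnt ?V (Pr (insert i Q))"
      unfolding V' by (rule Suc.IH[symmetric]) (use Suc.prems in auto)
    also have "\<dots> = (\<Sum>y\<in>{y\<in>?V. y \<noteq> i \<and> Pr (insert i Q) i y}. cnt (?V - {i,y}) (Pr (insert i Q)))"
      by (rule cnt_remove[OF fV iV Pr_sym])
    also have "{y\<in>?V. y \<noteq> i \<and> Pr (insert i Q) i y} = Y2"
      unfolding Y2_def Pr_def using Suc.prems(2) by (auto dest: subsetD[OF Suc.prems(2)])
    also have "(\<Sum>y\<in>Y2. cnt (?V - {i,y}) (Pr (insert i Q))) = (\<Sum>y\<in>Y2. cnt (?V - {i,y}) (Pr Q))"
      by (rule sum.cong[OF refl], rule cnt_cong) (auto simp: Pr_def)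
    finally show ?thesis by simp
  qed
  finally show ?case by simp
qed

definition U :: "nat \<Rightarrow> nat \<Rightarrow> real" where
  "U a r = (if a \<le> r \<and> even (r - a) then
     (\<Sum>j=0..(r-a) div 2. (-1)^j * fact (r - j) / (fact j * fact ((r-a) div 2 - j) * 2^((r-a) div 2 - j)))
   else 0)"

lemma U_eq: "U a (a + 2*T) = (\<Sum>j=0..T. (-1)^j * fact (a + 2*T - j) / (fact j * fact (T - j) * 2^(T - j)))"
  unfolding U_def by simp

lemma U_zero: assumes "\<not> (a \<le> r \<and> even (r - a))" shows "U a r = 0"
  unfolding U_def by (subst if_not_P[OF assms]) (rule refl)

lemma claim:
  fixes a S :: nat
  shows "(\<Sum>j=0..Suc S. (-1)^j * fact (a + 2*Suc S - j) / (fact j * fact (Suc S - j) * 2^(Suc S - j)))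
   = real a * (\<Sum>j=0..Suc S. (-1)^j * fact (a + 2*Suc S - 1 - j) / (fact j * fact (Suc S - j) * 2^(Suc S - j)))
   + (\<Sum>j=0..S. (-1)^j * fact (Suc a + 2*S - j) / (fact j * fact (S - j) * 2^(S - j)))
   - (\<Sum>j=0..S. (-1)^j * fact (a + 2*S - j) / (fact j * fact (S - j) * 2^(S - j)))"
proof -
  define X where "X j = (-1)^j * fact (a + 2*Suc S - 1 - j) / (fact j * fact (Suc S - j) * 2^(Suc S - j) :: real)" for j
  define E where "E j = 2 * real (Suc S - j) * X j" for j
  define D where "D j = real j * X j" for j
  have pt: "(-1)^j * fact (a + 2*Suc S - j) / (fact j * fact (Suc S - j) * 2^(Suc S - j)) = real a * X j + E j + D j"
    if "j \<le> Suc S" for j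
  proof -
    have pos: "a + 2*Suc S - j > 0" using that by simp
    have f: "fact (a + 2*Suc S - j) = real (a + 2*Suc S - j) * fact (a + 2*Suc S - j - 1)"
      using fact_reduce[OF pos] by simp
    have n: "real (a + 2*Suc S - j) = real a + 2 * real (Suc S - j) + real j"
      using that by (simp add: of_nat_diff)
    have m: "a + 2*Suc S - j - 1 = a + 2*Suc S - 1 - j" by simp
    show ?thesis unfolding E_def D_def X_def f n m by (simp add: field_simps)
  qed
  have sE: "(\<Sum>j=0..Suc S. E j) = (\<Sum>j=0..S. (-1)^j * fact (Suc a + 2*S - j) / (fact j * fact (S - j) * 2^(S - j)))"
  proof -
    have "(\<Sum>j=0..Suc S. E j) = (\<Sum>j=0..S. E j) + E (Suc S)" by simp
    also have "E (Suc S) = 0" unfolding E_def by simp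
    also have "(\<Sum>j=0..S. E j) = (\<Sum>j=0..S. (-1)^j * fact (Suc a + 2*S - j) / (fact j * fact (S - j) * 2^(S - j)))"
    proof (rule sum.cong[OF refl])
      fix j assume "j \<in> {0..S}"
      then have j: "j \<le> S" by simp
      have s: "Suc S - j = Suc (S - j)" using j by simp
      have t: "a + 2*Suc S - 1 - j = Suc a + 2*S - j" by simp
      have nz: "real (Suc (S - j)) \<noteq> 0" "fact j \<noteq> (0::real)" "fact (S-j) \<noteq> (0::real)" by simp_all
      show "E j = (-1)^j * fact (Suc a + 2*S - j) / (fact j * fact (S - j) * 2^(S - j))"
        unfolding E_def X_def s t fact_Suc using nz by (simp add: field_simps del: of_nat_Suc)
    qed
    finally show ?thesis by simp
  qed
  have sD: "(\<Sum>j=0..Suc S. D j) = - (\<Sum>j=0..S. (-1)^j * fact (a + 2*S - j) / (fact j * fact (S - j) * 2^(S - j)))"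
  proof -
    have "(\<Sum>j=0..Suc S. D j) = D 0 + (\<Sum>j=0..S. D (Suc j))" using sum.atLeast0_atMost_Suc_shift[of D S] by (simp add: comp_def del: sum.atLeast0_atMost_Suc)
    also have "D 0 = 0" unfolding D_def by simp
    also have "(\<Sum>j=0..S. D (Suc j)) = (\<Sum>j=0..S. - ((-1)^j * fact (a + 2*S - j) / (fact j * fact (S - j) * 2^(S - j))))"
    proof (rule sum.cong[OF refl])
      fix j assume "j \<in> {0..S}"
      have t: "a + 2*Suc S - 1 - Suc j = a + 2*S - j" by simp
      have nz: "real (Suc j) \<noteq> 0" "fact j \<noteq> (0::real)" "fact (S-j) \<noteq> (0::real)" by simp_all
      show "D (Suc j) = - ((-1)^j * fact (a + 2*S - j) / (fact j * fact (S - j) * 2^(S - j)))"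
        unfolding D_def X_def t fact_Suc using nz by (simp add: field_simps del: of_nat_Suc)
    qed
    finally show ?thesis by (simp add: sum_negf)
  qed
  have "(\<Sum>j=0..Suc S. (-1)^j * fact (a + 2*Suc S - j) / (fact j * fact (Suc S - j) * 2^(Suc S - j)))
      = (\<Sum>j=0..Suc S. real a * X j + E j + D j)"
    by (rule sum.cong[OF refl]) (use pt in auto)
  also have "\<dots> = real a * (\<Sum>j=0..Suc S. X j) + (\<Sum>j=0..Suc S. E j) + (\<Sum>j=0..Suc S. D j)"
    by (simp only: sum.distrib sum_distrib_left)
  finally show ?thesis unfolding sE sD X_def by simp
qed

lemma l1: assumes h: "\<not> (a \<le> Suc r \<and> even (Suc r - a))" and a: "a \<noteq> 0" shows "\<not> (a-1 \<le> r \<and> even (r - (a-1)))"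
proof
  assume c: "a-1 \<le> r \<and> even (r - (a-1))"
  then have c1: "a-1 \<le> r" and c2: "even (r - (a-1))" by blast+
  have e: "Suc r - a = r - (a-1)" using a by arith
  have "a \<le> Suc r" using c1 a by arith
  moreover have "even (Suc r - a)" unfolding e by (rule c2)
  ultimately show False using h by blast
qed
lemma l2: assumes h: "\<not> (a \<le> Suc r \<and> even (Suc r - a))" shows "\<not> (Suc a \<le> r \<and> even (r - Suc a))"
proof
  assume c: "Suc a \<le> r \<and> even (r - Suc a)"
  then have c1: "Suc a \<le> r" and c2: "even (r - Suc a)" by blast+
  have e: "Suc r - a = (r - Suc a) + 2" using c1 by arith
  have "a \<le> Suc r" using c1 by arith
  moreover have "even (Suc r - a)" unfolding e by (rule dvd_add[OF c2 dvd_refl])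
  ultimately show False using h by blast
qed
lemma l3: assumes h: "\<not> (a \<le> Suc r \<and> even (Suc r - a))" and r: "r \<noteq> 0" shows "\<not> (a \<le> r - 1 \<and> even (r - 1 - a))"
proof
  assume c: "a \<le> r - 1 \<and> even (r - 1 - a)"
  then have c1: "a \<le> r - 1" and c2: "even (r - 1 - a)" by blast+
  have e: "Suc r - a = (r - 1 - a) + 2" using c1 r by arith
  have "a \<le> Suc r" using c1 by arith
  moreover have "even (Suc r - a)" unfolding e by (rule dvd_add[OF c2 dvd_refl])
  ultimately show False using h by blast
qed
lemma l4: assumes "a \<le> Suc r \<and> even (Suc r - a)" obtains T where "Suc r = a + 2*T"
proof -
  have c1: "a \<le> Suc r" and c2: "even (Suc r - a)" using assms by blast+
  from c2 obtain T where "Suc r - a = 2*T" by (rule evenE)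
  then have "Suc r = a + 2*T" using c1 by arith
  then show ?thesis by (rule that)
qed

lemma K: "U a (Suc r) = real a * U (a-1) r + U (Suc a) r - (if r = 0 then 0 else U a (r-1))"
proof (cases "a \<le> Suc r \<and> even (Suc r - a)")
  case False
  have 1: "real a * U (a-1) r = 0"
  proof (cases "a = 0")
    case False
    have "U (a-1) r = 0" by (rule U_zero[OF l1[OF \<open>\<not> (a \<le> Suc r \<and> even (Suc r - a))\<close> False]])
    then show ?thesis by simp
  qed simp
  have 2: "U (Suc a) r = 0" by (rule U_zero[OF l2[OF False]])
  have 3: "r \<noteq> 0 \<Longrightarrow> U a (r-1) = 0" by (rule U_zero[OF l3[OF False]])
  have 4: "U a (Suc r) = 0" by (rule U_zero[OF False])
  show ?thesis
  proof (cases "r = 0")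
    case True
    then show ?thesis unfolding 1 2 4 by simp
  next
    case False
    then show ?thesis unfolding 1 2 4 3[OF False] by simp
  qed
next
  case True
  then obtain T where T: "Suc r = a + 2*T" by (rule l4)
  show ?thesis
  proof (cases T)
    case 0
    then have a: "a = Suc r" using T by simp
    have u1: "U a (Suc r) = fact (Suc r)" using U_eq[of a 0] a by simp
    have u2: "U (a-1) r = fact r" using U_eq[of r 0] a by simp
    have u3: "U (Suc a) r = 0" by (rule U_zero) (use a in simp)
    have u4: "r \<noteq> 0 \<Longrightarrow> U a (r-1) = 0" by (rule U_zero) (use a in simp)
    show ?thesis using u1 u2 u3 u4 a by (simp add: fact_Suc)
  next
    case (Suc S)
    have r1: "Suc r = a + 2*Suc S" using T Suc by simp
    have r3: "r = Suc a + 2*S" using T Suc by simp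
    have r4: "r - 1 = a + 2*S" using T Suc by simp
    have rnz: "r \<noteq> 0" using r3 by simp
    have u1: "U a (Suc r) = (\<Sum>j=0..Suc S. (-1)^j * fact (a + 2*Suc S - j) / (fact j * fact (Suc S - j) * 2^(Suc S - j)))"
      unfolding r1 by (rule U_eq)
    have u2: "real a * U (a-1) r = real a * (\<Sum>j=0..Suc S. (-1)^j * fact (a + 2*Suc S - 1 - j) / (fact j * fact (Suc S - j) * 2^(Suc S - j)))"
    proof (cases "a = 0")
      case False
      have r2: "r = (a-1) + 2 * Suc S" using T Suc False by simp
      have q: "(a-1) + 2 * Suc S = a + 2*Suc S - 1" using False by simp
      have "U (a-1) r = (\<Sum>j=0..Suc S. (-1)^j * fact ((a-1) + 2*Suc S - j) / (fact j * fact (Suc S - j) * 2^(Suc S - j)))"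
        unfolding r2 by (rule U_eq)
      also have "\<dots> = (\<Sum>j=0..Suc S. (-1)^j * fact (a + 2*Suc S - 1 - j) / (fact j * fact (Suc S - j) * 2^(Suc S - j)))"
        by (simp only: q)
      finally show ?thesis by (simp only:)
    qed simp
    have u3: "U (Suc a) r = (\<Sum>j=0..S. (-1)^j * fact (Suc a + 2*S - j) / (fact j * fact (S - j) * 2^(S - j)))"
      unfolding r3 by (rule U_eq)
    have u4: "U a (r-1) = (\<Sum>j=0..S. (-1)^j * fact (a + 2*S - j) / (fact j * fact (S - j) * 2^(S - j)))"
      unfolding r4 by (rule U_eq)
    have "U a (Suc r) = real a * U (a-1) r + U (Suc a) r - U a (r-1)"
      unfolding u1 u2 u3 u4 by (rule claim)
    then show ?thesis using rnz by (simp only: if_False)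
  qed
qed

lemma Fval: "real (F a False r) = U a r \<and> (a \<ge> 1 \<longrightarrow> real (F a True r) = U a r - (if r = 0 then 0 else U (a-1) (r-1)))"
proof (induction r arbitrary: a)
  case 0
  have "U 0 0 = 1" using U_eq[of 0 0] by simp
  moreover have "a \<ge> 1 \<Longrightarrow> U a 0 = 0" by (rule U_zero) simp
  ultimately show ?case by auto
next
  case (Suc r)
  have k: "U a (Suc r) = real a * U (a-1) r + U (Suc a) r - (if r = 0 then 0 else U a (r-1))" by (rule K)
  have f1: "real (F (a-1) False r) = U (a-1) r" using Suc.IH by blast
  have f2: "real (F (Suc a) True r) = U (Suc a) r - (if r = 0 then 0 else U a (r-1))" using Suc.IH[of "Suc a"] by simp
  have A: "real (F a False (Suc r)) = U a (Suc r)" using k f1 f2 by simp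
  have B: "real (F a True (Suc r)) = U a (Suc r) - U (a-1) r" if a1: "a \<ge> 1"
  proof -
    have "real (F a True (Suc r)) = real (a-1) * real (F (a-1) False r) + real (F (Suc a) True r)"
      by simp
    also have "real (a-1) = real a - 1" using a1 by (simp add: of_nat_diff)
    finally show ?thesis using k f1 f2 by (simp add: algebra_simps)
  qed
  show ?case using A B by simp
qed

theorem mainTheorem5:
  fixes m :: nat
  assumes "m \<ge> 1"
  shows "real (card {M. perfect_matching {1..2*m} (path_complement_edges m) M}) =
    (\<Sum>k=0..m. (-1) ^ (m - k) * fact (m + k) / (fact k * fact (m - k) * 2 ^ k))"
proof -
  have E: "path_complement_edges m = Ed {1..2*m} (Pr {})"
    unfolding path_complement_edges_def Ed_def Pr_def by simp
  have V: "{1..2*m} = {} \<union> {1..<1+2*m}" by auto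
  have "card {M. perfect_matching {1..2*m} (path_complement_edges m) M} = cnt ({} \<union> {1..<1+2*m}) (Pr {})"
    unfolding E cnt_def using V by simp
  also have "\<dots> = F (card ({}::nat set)) (1 - 1 \<in> ({}::nat set)) (2*m)"
    by (rule state) auto
  finally have c: "card {M. perfect_matching {1..2*m} (path_complement_edges m) M} = F 0 False (2*m)" by simp
  have "real (F 0 False (2*m)) = U 0 (0 + 2*m)" using Fval by simp
  also have "\<dots> = (\<Sum>j=0..m. (-1)^j * fact (2*m - j) / (fact j * fact (m - j) * 2^(m - j)))"
    unfolding U_eq by simp
  also have "\<dots> = (\<Sum>k=0..m. (-1)^(m-k) * fact (2*m - (m-k)) / (fact (m-k) * fact (m - (m-k)) * 2^(m - (m-k))))"
    by (rule sum.atLeastAtMost_rev[where n=0, simplified])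
  also have "\<dots> = (\<Sum>k=0..m. (-1) ^ (m - k) * fact (m + k) / (fact k * fact (m - k) * 2 ^ k))"
  proof (rule sum.cong[OF refl])
    fix k assume "k \<in> {0..m}"
    then have k: "k \<le> m" by simp
    have "2*m - (m-k) = m + k" "m - (m-k) = k" using k by auto
    then show "(-1)^(m-k) * fact (2*m - (m-k)) / (fact (m-k) * fact (m - (m-k)) * 2^(m - (m-k))) =
      (-1) ^ (m - k) * fact (m + k) / (fact k * fact (m - k) * (2::real) ^ k)"
      by (simp add: mult.commute)
  qed
  finally show ?thesis using c by simp
qed

end
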